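(* Let $a,b\in\mathbb{R}$ with $0\le a<b$, let $\alpha\in(0,1]$, and let $f:[a,b]\to\mathbb{R}$ be $\alpha$-fractional differentiable. Let $M:=\sup_{t\in(a,b)}|D_\alpha f(t)|$. Then for $t\in[a,b]$, $$ \left|f(t)-\frac{\alpha}{b^\alpha-a^\alpha}\int_a^b f(s)\,d_\alpha s\right|\le\frac{M}{2\alpha(b^\alpha-a^\alpha)}\left[(t^\alpha-a^\alpha)^2+(b^\alpha-t^\alpha)^2\right]. $$ This inequality is sharp in the sense that the right-hand side cannot be replaced by a smaller one.
   Context: The conformable $\alpha$-fractional derivative is $D_\alpha f(t):=\lim_{\varepsilon\to 0}\frac{f(t+\varepsilon t^{1-\alpha})-f(t)}{\varepsilon}$ for $t>0$, $D_\alpha f(0):=\lim_{t\to0^+}D_\alpha f(t)$. Integrals: $\int_a^b h(s)\,d_\alpha s:=\int_a^b h(s)s^{\alpha-1}\,ds$. *)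

theory Defs
  imports "HOL-Analysis.Analysis"
begin

definition conf_has_deriv_within ::
  "real \<Rightarrow> (real \<Rightarrow> real) \<Rightarrow> real \<Rightarrow> real \<Rightarrow> real set \<Rightarrow> bool" where
  "conf_has_deriv_within \<alpha> f D t S \<longleftrightarrow>
     ((\<lambda>\<epsilon>. (f (t + \<epsilon> * t powr (1 - \<alpha>)) - f t) / \<epsilon>) \<longlongrightarrow> D)
       (at 0 within {\<epsilon>. t + \<epsilon> * t powr (1 - \<alpha>) \<in> S})"

definition conf_diff_on ::
  "real \<Rightarrow> (real \<Rightarrow> real) \<Rightarrow> (real \<Rightarrow> real) \<Rightarrow> real \<Rightarrow> real \<Rightarrow> bool" where
  "conf_diff_on \<alpha> f Df a b \<longleftrightarrow>
     continuous_on {a..b} f \<and>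
     (\<forall>t\<in>{a..b}. 0 < t \<longrightarrow> conf_has_deriv_within \<alpha> f (Df t) t {a..b}) \<and>
     (0 \<in> {a..b} \<longrightarrow> (Df \<longlongrightarrow> Df 0) (at_right 0))"

definition conf_sup :: "(real \<Rightarrow> real) \<Rightarrow> real \<Rightarrow> real \<Rightarrow> ereal" where
  "conf_sup Df a b = (SUP t\<in>{a<..<b}. ereal \<bar>Df t\<bar>)"

definition conf_integral :: "real \<Rightarrow> real \<Rightarrow> real \<Rightarrow> (real \<Rightarrow> real) \<Rightarrow> real" where
  "conf_integral \<alpha> a b h = integral {a..b} (\<lambda>s. h s * s powr (\<alpha> - 1))"

end

theory Submission imports Defs begin
lemma conf_to_deriv:
  fixes f :: "real \<Rightarrow> real"
  assumes t: "0 < t" and c: "c = t powr (1 - \<alpha>)"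
    and lim: "((\<lambda>\<epsilon>. (f (t + \<epsilon> * c) - f t) / \<epsilon>) \<longlongrightarrow> D) (at 0 within {\<epsilon>. t + \<epsilon> * c \<in> S})"
  shows "(f has_real_derivative D / c) (at t within S)"
proof -
  have cpos: "c > 0" using t c by simp
  let ?q = "\<lambda>\<epsilon>. (f (t + \<epsilon> * c) - f t) / \<epsilon>"
  have fl: "filterlim (\<lambda>y. (y - t) / c) (at 0 within {\<epsilon>. t + \<epsilon> * c \<in> S}) (at t within S)"
  proof -
    have "((\<lambda>y. (y - t) / c) \<longlongrightarrow> (t - t) / c) (at t within S)"
      using cpos by (intro tendsto_intros) auto
    hence 1: "((\<lambda>y. (y - t) / c) \<longlongrightarrow> 0) (at t within S)" by simp
    have 2: "eventually (\<lambda>y. (y - t) / c \<in> {\<epsilon>. t + \<epsilon> * c \<in> S} - {0}) (at t within S)"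
      unfolding eventually_at_filter using cpos by (intro always_eventually) (simp add: field_simps)
    show ?thesis using 1 2 by (rule filterlim_at_withinI)
  qed
  have "((\<lambda>y. ?q ((y - t) / c) / c) \<longlongrightarrow> D / c) (at t within S)"
    by (intro tendsto_intros filterlim_compose[OF lim fl]) (use cpos in auto)
  moreover have "(\<lambda>y. ?q ((y - t) / c) / c) = (\<lambda>y. (f y - f t) / (y - t))"
  proof (rule ext) fix y show "?q ((y - t) / c) / c = (f y - f t) / (y - t)" using cpos by (cases "y = t") (auto simp: field_simps) qed
  ultimately show ?thesis by (simp add: has_field_derivative_iff)
qed

lemma deriv_to_conf:
  fixes f :: "real \<Rightarrow> real"
  assumes t: "0 < t" and c: "c = t powr (1 - \<alpha>)"
    and d: "(f has_real_derivative D / c) (at t within S)"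
  shows "((\<lambda>\<epsilon>. (f (t + \<epsilon> * c) - f t) / \<epsilon>) \<longlongrightarrow> D) (at 0 within {\<epsilon>. t + \<epsilon> * c \<in> S})"
proof -
  have cpos: "c > 0" using t c by simp
  have fl: "filterlim (\<lambda>\<epsilon>. t + \<epsilon> * c) (at t within S) (at 0 within {\<epsilon>. t + \<epsilon> * c \<in> S})"
  proof -
    have "((\<lambda>\<epsilon>. t + \<epsilon> * c) \<longlongrightarrow> t + 0 * c) (at 0 within {\<epsilon>. t + \<epsilon> * c \<in> S})"
      by (intro tendsto_intros)
    hence 1: "((\<lambda>\<epsilon>. t + \<epsilon> * c) \<longlongrightarrow> t) (at 0 within {\<epsilon>. t + \<epsilon> * c \<in> S})" by simp
    have 2: "eventually (\<lambda>\<epsilon>. t + \<epsilon> * c \<in> S - {t}) (at 0 within {\<epsilon>. t + \<epsilon> * c \<in> S})"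
      unfolding eventually_at_filter using cpos by (intro always_eventually) (simp add: field_simps)
    show ?thesis using 1 2 by (rule filterlim_at_withinI)
  qed
  have "((\<lambda>y. (f y - f t) / (y - t)) \<longlongrightarrow> D / c) (at t within S)"
    using d by (simp add: has_field_derivative_iff)
  from filterlim_compose[OF this fl]
  have "((\<lambda>\<epsilon>. c * ((f (t + \<epsilon> * c) - f t) / (t + \<epsilon> * c - t))) \<longlongrightarrow> c * (D / c)) (at 0 within {\<epsilon>. t + \<epsilon> * c \<in> S})"
    by (rule tendsto_mult[OF tendsto_const])
  moreover have "(\<lambda>\<epsilon>. c * ((f (t + \<epsilon> * c) - f t) / (t + \<epsilon> * c - t))) = (\<lambda>\<epsilon>. (f (t + \<epsilon> * c) - f t) / \<epsilon>)"
  proof (rule ext) fix e show "c * ((f (t + e * c) - f t) / (t + e * c - t)) = (f (t + e * c) - f t) / e" using cpos by (cases "e = 0") (auto simp: field_simps) qed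
  ultimately show ?thesis using cpos by simp
qed

lemma absint:
  fixes A B T :: real
  assumes "A \<le> T" "T \<le> B"
  shows "((\<lambda>u. \<bar>T - u\<bar>) has_integral ((T - A)^2 + (B - T)^2) / 2) {A..B}"
proof -
  have 1: "((\<lambda>u. T - u) has_integral ((T*T - T^2/2) - (T*A - A^2/2))) {A..T}"
    by (rule fundamental_theorem_of_calculus[OF assms(1)])
      (auto intro!: derivative_eq_intros simp: has_real_derivative_iff_has_vector_derivative[symmetric])
  have 2: "((\<lambda>u. u - T) has_integral ((B^2/2 - T*B) - (T^2/2 - T*T))) {T..B}"
    by (rule fundamental_theorem_of_calculus[OF assms(2)])
      (auto intro!: derivative_eq_intros simp: has_real_derivative_iff_has_vector_derivative[symmetric])
  have i1: "((\<lambda>u. \<bar>T - u\<bar>) has_integral ((T*T - T^2/2) - (T*A - A^2/2))) {A..T}"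
    using 1 by (subst has_integral_cong[where g="\<lambda>u. T - u"]) auto
  have i2: "((\<lambda>u. \<bar>T - u\<bar>) has_integral ((B^2/2 - T*B) - (T^2/2 - T*T))) {T..B}"
    using 2 by (subst has_integral_cong[where g="\<lambda>u. u - T"]) auto
  have e: "((T*T - T^2/2) - (T*A - A^2/2)) + ((B^2/2 - T*B) - (T^2/2 - T*T)) = ((T - A)^2 + (B - T)^2) / 2"
    by (simp add: power2_eq_square field_simps)
  from has_integral_combine[OF assms i1 i2] show ?thesis
    by (simp only: e)
qed

lemma lipsch:
  fixes g g' :: "real \<Rightarrow> real"
  assumes cont: "continuous_on {A..B} g"
    and d: "\<And>u. A < u \<Longrightarrow> u < B \<Longrightarrow> (g has_real_derivative g' u) (at u)"
    and bd: "\<And>u. A < u \<Longrightarrow> u < B \<Longrightarrow> \<bar>g' u\<bar> \<le> L"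
    and xy: "x \<in> {A..B}" "y \<in> {A..B}"
  shows "\<bar>g x - g y\<bar> \<le> L * \<bar>x - y\<bar>"
proof -
  have main: "\<bar>g q - g p\<bar> \<le> L * (q - p)" if pq: "p < q" "p \<in> {A..B}" "q \<in> {A..B}" for p q
  proof -
    have "continuous_on {p..q} g" using cont pq by (auto elim!: continuous_on_subset)
    moreover have "\<And>x. p < x \<Longrightarrow> x < q \<Longrightarrow> g differentiable (at x)"
      using d pq by (auto simp: real_differentiable_def) (meson atLeastAtMost_iff le_less_trans less_le_trans)
    ultimately obtain l z where z: "p < z" "z < q" "DERIV g z :> l" "g q - g p = (q - p) * l"
      using MVT[OF pq(1)] by blast
    have "A < z" "z < B" using z pq by auto
    with z d have "l = g' z" using DERIV_unique by blast
    with bd \<open>A < z\<close> \<open>z < B\<close> have "\<bar>l\<bar> \<le> L" by simp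
    then show ?thesis using z(4) pq(1) by (simp add: abs_mult mult_right_mono mult.commute)
  qed
  show ?thesis
  proof (cases x y rule: linorder_cases)
    case less then show ?thesis using main[of x y] xy by (simp add: abs_minus_commute)
  next
    case greater then show ?thesis using main[of y x] xy by simp
  qed simp
qed

lemma core:
  fixes f Df :: "real \<Rightarrow> real"
  assumes a0: "0 \<le> a" and ab: "a < b" and al: "0 < \<alpha>"
    and cont: "continuous_on {a..b} f"
    and der: "\<And>s. a < s \<Longrightarrow> s < b \<Longrightarrow> (f has_real_derivative Df s * s powr (\<alpha> - 1)) (at s)"
    and bd: "\<And>s. a < s \<Longrightarrow> s < b \<Longrightarrow> \<bar>Df s\<bar> \<le> m"
    and t: "t \<in> {a..b}"
  shows "\<bar>f t - \<alpha> / (b powr \<alpha> - a powr \<alpha>) * integral {a..b} (\<lambda>s. f s * s powr (\<alpha> - 1))\<bar>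
     \<le> m * (1 / (2 * \<alpha> * (b powr \<alpha> - a powr \<alpha>)) *
                    ((t powr \<alpha> - a powr \<alpha>)\<^sup>2 + (b powr \<alpha> - t powr \<alpha>)\<^sup>2))"
proof -
  define A where "A = a powr \<alpha>"
  define B where "B = b powr \<alpha>"
  define T where "T = t powr \<alpha>"
  define g where "g = (\<lambda>u. f (u powr (1 / \<alpha>)))"
  have AB: "A < B" unfolding A_def B_def using a0 ab al by (simp add: powr_less_mono2)
  have A0: "0 \<le> A" unfolding A_def by simp
  have pw: "(x powr \<alpha>) powr (1 / \<alpha>) = x" if "0 \<le> x" for x
    using that al by (simp add: powr_powr)
  have pw2: "(u powr (1 / \<alpha>)) powr \<alpha> = u" if "0 \<le> u" for u
    using that al by (simp add: powr_powr)
  have TAB: "A \<le> T" "T \<le> B" using t a0 al unfolding A_def B_def T_def by (auto intro: powr_mono2)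
  have map: "u powr (1 / \<alpha>) \<in> {a..b}" if "u \<in> {A..B}" for u
  proof -
    have "(A) powr (1/\<alpha>) \<le> u powr (1/\<alpha>)" "u powr (1/\<alpha>) \<le> B powr (1/\<alpha>)"
      using that A0 al by (auto intro: powr_mono2)
    then show ?thesis using pw a0 ab unfolding A_def B_def by auto
  qed
  have gcont: "continuous_on {A..B} g"
    unfolding g_def
  proof (rule continuous_on_compose2[OF cont _ ])
    show "continuous_on {A..B} (\<lambda>u. u powr (1 / \<alpha>))"
      by (intro continuous_on_powr' continuous_on_id continuous_on_const) (use A0 al in auto)
    show "(\<lambda>u. u powr (1 / \<alpha>)) ` {A..B} \<subseteq> {a..b}" using map by auto
  qed
  have gder: "(g has_real_derivative Df (u powr (1/\<alpha>)) / \<alpha>) (at u)" if u: "A < u" "u < B" for u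
  proof -
    define s where "s = u powr (1/\<alpha>)"
    have upos: "0 < u" using u A0 by simp
    have s: "a < s" "s < b"
    proof -
      have "A powr (1/\<alpha>) < u powr (1/\<alpha>)" "u powr (1/\<alpha>) < B powr (1/\<alpha>)"
        using u A0 al by (auto intro: powr_less_mono2)
      then show "a < s" "s < b" using pw a0 ab unfolding A_def B_def s_def by auto
    qed
    have spos: "0 < s" using s a0 by simp
    have us: "u = s powr \<alpha>" unfolding s_def using pw2 upos by simp
    have "(g has_real_derivative Df s * s powr (\<alpha> - 1) * (1 / \<alpha> * u powr (1 / \<alpha> - 1))) (at u)"
      unfolding g_def s_def
      by (rule DERIV_chain2[OF der has_real_derivative_powr[OF upos]]) (use s s_def in auto)
    moreover have "Df s * s powr (\<alpha> - 1) * (1 / \<alpha> * u powr (1 / \<alpha> - 1)) = Df s / \<alpha>"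
    proof -
      have "u powr (1 / \<alpha> - 1) = s powr (1 - \<alpha>)"
        using al spos by (simp add: us powr_powr algebra_simps)
      moreover have "s powr (\<alpha> - 1) * s powr (1 - \<alpha>) = 1"
        using spos by (simp add: powr_add[symmetric])
      ultimately show ?thesis by (simp add: field_simps)
    qed
    ultimately have "(g has_real_derivative Df s / \<alpha>) (at u)" by (simp only:)
    then show ?thesis unfolding s_def .
  qed
  have lip: "\<bar>g x - g y\<bar> \<le> (m / \<alpha>) * \<bar>x - y\<bar>" if "x \<in> {A..B}" "y \<in> {A..B}" for x y
  proof (rule lipsch[OF gcont gder _ that])
    fix u assume "A < u" "u < B"
    have "u powr (1/\<alpha>) \<in> {a..b}" using map \<open>A < u\<close> \<open>u < B\<close> by auto
    have "A powr (1/\<alpha>) < u powr (1/\<alpha>)" "u powr (1/\<alpha>) < B powr (1/\<alpha>)"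
      using \<open>A < u\<close> \<open>u < B\<close> A0 al by (auto intro: powr_less_mono2)
    then have "a < u powr (1/\<alpha>)" "u powr (1/\<alpha>) < b" using pw a0 ab unfolding A_def B_def by auto
    then show "\<bar>Df (u powr (1/\<alpha>)) / \<alpha>\<bar> \<le> m / \<alpha>" using bd al by (simp add: divide_right_mono)
  qed auto
  have sub: "((\<lambda>x. (\<alpha> * x powr (\<alpha> - 1)) *\<^sub>R g (x powr \<alpha>)) has_integral
      (integral {a powr \<alpha>..b powr \<alpha>} g - integral {b powr \<alpha>..a powr \<alpha>} g)) {a..b}"
  proof -
    have im: "(\<lambda>x. x powr \<alpha>) ` {a..b} \<subseteq> {A..B}"
    proof
      fix y assume "y \<in> (\<lambda>x. x powr \<alpha>) ` {a..b}"
      then obtain x where x: "x \<in> {a..b}" "y = x powr \<alpha>" by blast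
      have "a powr \<alpha> \<le> x powr \<alpha>" "x powr \<alpha> \<le> b powr \<alpha>"
        using x a0 al by (simp_all add: powr_mono2)
      then show "y \<in> {A..B}" unfolding A_def B_def x(2) by simp
    qed
    have pc: "continuous_on {a..b} (\<lambda>x. x powr \<alpha>)"
      by (intro continuous_on_powr' continuous_on_id continuous_on_const) (use a0 al in auto)
    have dd: "((\<lambda>x. x powr \<alpha>) has_real_derivative \<alpha> * x powr (\<alpha> - 1)) (at x within {a..b})"
      if "x \<in> {a..b} - {0}" for x
    proof -
      have "0 < x" using that a0 by auto
      then show ?thesis by (rule has_field_derivative_at_within[OF has_real_derivative_powr])
    qed
    show ?thesis
      using has_integral_substitution_general[of "{0}" a b "\<lambda>x. x powr \<alpha>" A B g, OF _ _ im gcont pc dd] ab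
      by simp
  qed
  define I where "I = integral {A..B} g"
  have "((\<lambda>x. \<alpha> * (f x * x powr (\<alpha> - 1))) has_integral I) {a..b}"
  proof -
    have "integral {B..A} g = 0" using AB by simp
    with sub have "((\<lambda>x. (\<alpha> * x powr (\<alpha> - 1)) *\<^sub>R g (x powr \<alpha>)) has_integral I) {a..b}"
      unfolding I_def A_def B_def by simp
    then show ?thesis
      by (rule has_integral_cong[THEN iffD1, rotated]) (use pw a0 in \<open>auto simp: g_def\<close>)
  qed
  from has_integral_cmul[OF this, of "1/\<alpha>"]
  have "((\<lambda>x. f x * x powr (\<alpha> - 1)) has_integral I / \<alpha>) {a..b}" using al by simp
  then have intI: "integral {a..b} (\<lambda>s. f s * s powr (\<alpha> - 1)) = I / \<alpha>" by (rule integral_unique)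
  have ft: "f t = g T" unfolding g_def T_def using pw t a0 by simp
  have gint: "g integrable_on {A..B}" using gcont by (rule integrable_continuous_interval)
  have diffint: "((\<lambda>u. g T - g u) has_integral (B - A) * g T - I) {A..B}"
  proof -
    have "((\<lambda>u. g T) has_integral (B - A) * g T) {A..B}"
      using has_integral_const_real[of "g T" A B] AB by simp
    from has_integral_diff[OF this integrable_integral[OF gint]] show ?thesis unfolding I_def .
  qed
  have bnd: "norm ((B - A) * g T - I) \<le> (m / \<alpha>) * (((T - A)^2 + (B - T)^2) / 2)"
  proof -
    have hi: "((\<lambda>u. (m / \<alpha>) * \<bar>T - u\<bar>) has_integral (m / \<alpha>) * (((T - A)^2 + (B - T)^2) / 2)) {A..B}"
      by (rule has_integral_mult_right[OF absint[OF TAB]])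
    show ?thesis
      using Henstock_Kurzweil_Integration.integral_norm_bound_integral[OF has_integral_integrable[OF diffint] has_integral_integrable[OF hi]]
        integral_unique[OF diffint] integral_unique[OF hi] lip TAB
      by (auto simp: abs_minus_commute)
  qed
  have "f t - \<alpha> / (B - A) * integral {a..b} (\<lambda>s. f s * s powr (\<alpha> - 1)) = ((B - A) * g T - I) / (B - A)"
    using AB al by (simp add: ft intI field_simps)
  then have "\<bar>f t - \<alpha> / (B - A) * integral {a..b} (\<lambda>s. f s * s powr (\<alpha> - 1))\<bar> \<le> (m / \<alpha>) * (((T - A)^2 + (B - T)^2) / 2) / (B - A)"
  proof -
    have "\<bar>((B - A) * g T - I) / (B - A)\<bar> = \<bar>(B - A) * g T - I\<bar> / (B - A)" using AB by simp
    also have "\<dots> \<le> (m / \<alpha>) * (((T - A)^2 + (B - T)^2) / 2) / (B - A)"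
      by (rule divide_right_mono) (use bnd AB in auto)
    finally show ?thesis using \<open>f t - _ = _\<close> by simp
  qed
  also have "\<dots> = m * (1 / (2 * \<alpha> * (B - A)) * ((T - A)\<^sup>2 + (B - T)\<^sup>2))"
    using AB al by (simp add: field_simps)
  finally show ?thesis unfolding A_def B_def T_def .
qed

lemma int_id: "A \<le> B \<Longrightarrow> integral {A..B} (\<lambda>u::real. u) = (B^2 - A^2) / 2"
proof -
  assume "A \<le> B"
  have "((\<lambda>u. u) has_integral (B^2/2 - A^2/2)) {A..B}"
    by (rule fundamental_theorem_of_calculus[OF \<open>A \<le> B\<close>])
      (auto intro!: derivative_eq_intros simp: has_real_derivative_iff_has_vector_derivative[symmetric])
  then show ?thesis by (simp add: integral_unique field_simps)
qed

lemma sharp_integral: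
  fixes a b \<alpha> :: real
  assumes a0: "0 \<le> a" and ab: "a < b" and al: "0 < \<alpha>"
  shows "conf_integral \<alpha> a b (\<lambda>s. s powr \<alpha>) = ((b powr \<alpha>)^2 - (a powr \<alpha>)^2) / (2 * \<alpha>)"
proof -
  define A where "A = a powr \<alpha>"
  define B where "B = b powr \<alpha>"
  have AB: "A < B" unfolding A_def B_def using a0 ab al by (simp add: powr_less_mono2)
  have im: "(\<lambda>x. x powr \<alpha>) ` {a..b} \<subseteq> {A..B}"
  proof
    fix y assume "y \<in> (\<lambda>x. x powr \<alpha>) ` {a..b}"
    then obtain x where x: "x \<in> {a..b}" "y = x powr \<alpha>" by blast
    have "a powr \<alpha> \<le> x powr \<alpha>" "x powr \<alpha> \<le> b powr \<alpha>"
      using x a0 al by (simp_all add: powr_mono2)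
    then show "y \<in> {A..B}" unfolding A_def B_def x(2) by simp
  qed
  have pc: "continuous_on {a..b} (\<lambda>x. x powr \<alpha>)"
    by (intro continuous_on_powr' continuous_on_id continuous_on_const) (use a0 al in auto)
  have dd: "((\<lambda>x. x powr \<alpha>) has_real_derivative \<alpha> * x powr (\<alpha> - 1)) (at x within {a..b})"
    if "x \<in> {a..b} - {0}" for x
  proof -
    have "0 < x" using that a0 by auto
    then show ?thesis by (rule has_field_derivative_at_within[OF has_real_derivative_powr])
  qed
  have "((\<lambda>x. (\<alpha> * x powr (\<alpha> - 1)) *\<^sub>R (x powr \<alpha>)) has_integral
      (integral {a powr \<alpha>..b powr \<alpha>} (\<lambda>u. u) - integral {b powr \<alpha>..a powr \<alpha>} (\<lambda>u. u))) {a..b}"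
    using has_integral_substitution_general[of "{0}" a b "\<lambda>x. x powr \<alpha>" A B "\<lambda>u. u", OF _ _ im continuous_on_id pc dd] ab
    by simp
  also have "integral {a powr \<alpha>..b powr \<alpha>} (\<lambda>u. u) - integral {b powr \<alpha>..a powr \<alpha>} (\<lambda>u. u) = (B^2 - A^2) / 2"
    using AB int_id[of A B] unfolding A_def B_def by simp
  finally have h: "((\<lambda>x. \<alpha> * (x powr \<alpha> * x powr (\<alpha> - 1))) has_integral (B^2 - A^2) / 2) {a..b}"
    by (simp add: algebra_simps)
  from has_integral_cmul[OF h, of "1/\<alpha>"] al
  have "((\<lambda>x. x powr \<alpha> * x powr (\<alpha> - 1)) has_integral (B^2 - A^2) / (2 * \<alpha>)) {a..b}" by (simp add: mult.commute)
  then show ?thesis unfolding conf_integral_def A_def B_def by (rule integral_unique)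
qed

theorem mainTheorem16:
  fixes a b \<alpha> :: real
  assumes "0 \<le> a" and "a < b" and "0 < \<alpha>" and "\<alpha> \<le> 1"
  shows "(\<forall>f Df. conf_diff_on \<alpha> f Df a b \<longrightarrow>
            (\<forall>t\<in>{a..b}.
               ereal \<bar>f t - \<alpha> / (b powr \<alpha> - a powr \<alpha>) * conf_integral \<alpha> a b f\<bar>
               \<le> conf_sup Df a b * ereal (1 / (2 * \<alpha> * (b powr \<alpha> - a powr \<alpha>)) *
                    ((t powr \<alpha> - a powr \<alpha>)\<^sup>2 + (b powr \<alpha> - t powr \<alpha>)\<^sup>2))))
       \<and> (\<exists>f Df. \<exists>t\<in>{a..b}. conf_diff_on \<alpha> f Df a b \<and> 0 < conf_sup Df a b \<and>
               ereal \<bar>f t - \<alpha> / (b powr \<alpha> - a powr \<alpha>) * conf_integral \<alpha> a b f\<bar>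
               = conf_sup Df a b * ereal (1 / (2 * \<alpha> * (b powr \<alpha> - a powr \<alpha>)) *
                    ((t powr \<alpha> - a powr \<alpha>)\<^sup>2 + (b powr \<alpha> - t powr \<alpha>)\<^sup>2)))"
proof
  have a0: "0 \<le> a" and ab: "a < b" and al: "0 < \<alpha>" using assms by auto
  have AB: "a powr \<alpha> < b powr \<alpha>" using a0 ab al by (simp add: powr_less_mono2)
  have pinv: "x powr (\<alpha> - 1) * x powr (1 - \<alpha>) = 1" if "0 < x" for x
    using that by (simp add: powr_add[symmetric])
  show "\<forall>f Df. conf_diff_on \<alpha> f Df a b \<longrightarrow>
            (\<forall>t\<in>{a..b}.
               ereal \<bar>f t - \<alpha> / (b powr \<alpha> - a powr \<alpha>) * conf_integral \<alpha> a b f\<bar>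
               \<le> conf_sup Df a b * ereal (1 / (2 * \<alpha> * (b powr \<alpha> - a powr \<alpha>)) *
                    ((t powr \<alpha> - a powr \<alpha>)\<^sup>2 + (b powr \<alpha> - t powr \<alpha>)\<^sup>2)))"
  proof (intro allI impI ballI)
    fix f Df t
    assume cd: "conf_diff_on \<alpha> f Df a b" and t: "t \<in> {a..b}"
    have cont: "continuous_on {a..b} f" and dd: "\<And>s. s \<in> {a..b} \<Longrightarrow> 0 < s \<Longrightarrow> conf_has_deriv_within \<alpha> f (Df s) s {a..b}"
      using cd unfolding conf_diff_on_def by auto
    have der: "(f has_real_derivative Df s * s powr (\<alpha> - 1)) (at s)" if s: "a < s" "s < b" for s
    proof -
      have spos: "0 < s" using s a0 by simp
      have "(f has_real_derivative Df s / s powr (1 - \<alpha>)) (at s within {a..b})"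
        using conf_to_deriv[OF spos refl] dd[of s] s spos unfolding conf_has_deriv_within_def by auto
      moreover have "Df s / s powr (1 - \<alpha>) = Df s * s powr (\<alpha> - 1)"
        using pinv[OF spos] spos by (simp add: field_simps)
      ultimately show ?thesis using at_within_Icc_at[OF s] by simp
    qed
    define c where "c = 1 / (2 * \<alpha> * (b powr \<alpha> - a powr \<alpha>)) *
                    ((t powr \<alpha> - a powr \<alpha>)\<^sup>2 + (b powr \<alpha> - t powr \<alpha>)\<^sup>2)"
    have cpos: "0 < c"
    proof -
      have "0 < (t powr \<alpha> - a powr \<alpha>)\<^sup>2 + (b powr \<alpha> - t powr \<alpha>)\<^sup>2"
        using AB by (smt (verit) power2_less_0 sum_power2_eq_zero_iff)
      then show ?thesis unfolding c_def using AB al by simp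
    qed
    define M where "M = conf_sup Df a b"
    have mid: "(a + b) / 2 \<in> {a<..<b}" using ab by auto
    have Mge: "ereal \<bar>Df s\<bar> \<le> M" if "s \<in> {a<..<b}" for s
      unfolding M_def conf_sup_def using that by (rule SUP_upper)
    have M0: "0 \<le> M" using Mge[OF mid] by (rule order_trans[rotated]) simp
    show "ereal \<bar>f t - \<alpha> / (b powr \<alpha> - a powr \<alpha>) * conf_integral \<alpha> a b f\<bar> \<le> conf_sup Df a b * ereal c"

    proof (cases "M = \<infinity>")
      case True
      then show ?thesis using cpos M_def by simp
    next
      case False
      then obtain m where m: "M = ereal m" using M0 by (cases M) auto
      have bd: "\<bar>Df s\<bar> \<le> m" if "a < s" "s < b" for s using Mge[of s] that m by simp
      have "\<bar>f t - \<alpha> / (b powr \<alpha> - a powr \<alpha>) * conf_integral \<alpha> a b f\<bar> \<le> m * c"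
        unfolding conf_integral_def c_def
        by (rule core[OF a0 ab al cont der bd t])
      then show ?thesis using m M_def by simp
    qed
  qed
  show "\<exists>f Df. \<exists>t\<in>{a..b}. conf_diff_on \<alpha> f Df a b \<and> 0 < conf_sup Df a b \<and>
               ereal \<bar>f t - \<alpha> / (b powr \<alpha> - a powr \<alpha>) * conf_integral \<alpha> a b f\<bar>
               = conf_sup Df a b * ereal (1 / (2 * \<alpha> * (b powr \<alpha> - a powr \<alpha>)) *
                    ((t powr \<alpha> - a powr \<alpha>)\<^sup>2 + (b powr \<alpha> - t powr \<alpha>)\<^sup>2))"
  proof (intro exI bexI conjI)
    show "a \<in> {a..b}" using ab by simp
    show cd: "conf_diff_on \<alpha> (\<lambda>s. s powr \<alpha>) (\<lambda>s. \<alpha>) a b"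
      unfolding conf_diff_on_def
    proof (intro conjI ballI impI)
      show "continuous_on {a..b} (\<lambda>s. s powr \<alpha>)"
        by (intro continuous_on_powr' continuous_on_id continuous_on_const) (use a0 al in auto)
      show "((\<lambda>s. \<alpha>) \<longlongrightarrow> \<alpha>) (at_right 0)" by simp
      fix s assume "s \<in> {a..b}" "0 < s"
      have "((\<lambda>s. s powr \<alpha>) has_real_derivative \<alpha> / s powr (1 - \<alpha>)) (at s within {a..b})"
      proof -
        have "\<alpha> * s powr (\<alpha> - 1) = \<alpha> / s powr (1 - \<alpha>)"
          using pinv[OF \<open>0 < s\<close>] \<open>0 < s\<close> by (simp add: field_simps)
        then show ?thesis
          using has_field_derivative_at_within[OF has_real_derivative_powr[OF \<open>0 < s\<close>, of \<alpha>]] by simp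
      qed
      from deriv_to_conf[OF \<open>0 < s\<close> refl this]
      show "conf_has_deriv_within \<alpha> (\<lambda>s. s powr \<alpha>) \<alpha> s {a..b}"
        unfolding conf_has_deriv_within_def .
    qed
    have sup: "conf_sup (\<lambda>s. \<alpha>) a b = ereal \<alpha>"
      unfolding conf_sup_def using ab al by simp
    show "0 < conf_sup (\<lambda>s. \<alpha>) a b" using sup al by simp
    show "ereal \<bar>a powr \<alpha> - \<alpha> / (b powr \<alpha> - a powr \<alpha>) * conf_integral \<alpha> a b (\<lambda>s. s powr \<alpha>)\<bar> =
      conf_sup (\<lambda>s. \<alpha>) a b * ereal (1 / (2 * \<alpha> * (b powr \<alpha> - a powr \<alpha>)) *
        ((a powr \<alpha> - a powr \<alpha>)\<^sup>2 + (b powr \<alpha> - a powr \<alpha>)\<^sup>2))"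
    proof -
      define A where "A = a powr \<alpha>"
      define B where "B = b powr \<alpha>"
      have AB': "A < B" using AB unfolding A_def B_def .
      have "A - \<alpha> / (B - A) * ((B^2 - A^2) / (2 * \<alpha>)) = (A - B) / 2"
        using AB' al by (simp add: field_simps power2_eq_square)
      moreover have "\<alpha> * (1 / (2 * \<alpha> * (B - A)) * ((A - A)\<^sup>2 + (B - A)\<^sup>2)) = (B - A) / 2"
        using AB' al by (simp add: field_simps power2_eq_square)
      ultimately show ?thesis
        using AB' unfolding sup sharp_integral[OF a0 ab al] A_def[symmetric] B_def[symmetric]
        by simp
    qed
  qed
qed
end
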